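(* For every subdistribution $\mu$ on $\Sigma$, state assertion $A$ and $p\in[0,1]$: $\mu\vDash(\mathbb{P}[A]=p)\oplus\top$ iff $\mathbb{P}_\mu[A]\ge p$, where $\mathbb{P}_\mu[A]=\sum\{\mu(\sigma):\sigma\in\mathsf{supp}(\mu),\ \sigma\vDash_\Sigma A\}$.
   Context: A subdistribution on a countable set $\Sigma$ is $\mu\colon\Sigma\to[0,1]$ with $|\mu|=\sum_\sigma\mu(\sigma)\le1$; $\mathsf{supp}(\mu)=\{\sigma:\mu(\sigma)>0\}$; $\mu_1+\mu_2$ is the pointwise sum, defined when $|\mu_1|+|\mu_2|\le1$. $\mu\vDash\mathbb{P}[A]=p$ iff $|\mu|=p$ and every $\sigma\in\mathsf{supp}(\mu)$ satisfies $A$; $\mu\vDash\top$ always; $\mu\vDash\varphi\oplus\psi$ iff $\mu=\mu_1+\mu_2$ with $\mu_1\vDash\varphi$, $\mu_2\vDash\psi$. *)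

theory Defs
  imports "HOL-Analysis.Analysis"
begin

definition subdist :: "('a::countable \<Rightarrow> real) \<Rightarrow> bool" where
  "subdist \<mu> \<longleftrightarrow> (\<forall>s. 0 \<le> \<mu> s \<and> \<mu> s \<le> 1) \<and> \<mu> summable_on UNIV \<and> infsum \<mu> UNIV \<le> 1"

definition mass :: "('a::countable \<Rightarrow> real) \<Rightarrow> real" where
  "mass \<mu> = infsum \<mu> UNIV"

definition supp :: "('a \<Rightarrow> real) \<Rightarrow> 'a set" where
  "supp \<mu> = {s. \<mu> s > 0}"

datatype 'a assn = ProbEq "'a \<Rightarrow> bool" real | Top | Oplus "'a assn" "'a assn"

fun sat :: "('a::countable \<Rightarrow> real) \<Rightarrow> 'a assn \<Rightarrow> bool" where
  "sat \<mu> (ProbEq A p) \<longleftrightarrow> mass \<mu> = p \<and> (\<forall>s\<in>supp \<mu>. A s)"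
| "sat \<mu> Top \<longleftrightarrow> True"
| "sat \<mu> (Oplus \<phi> \<psi>) \<longleftrightarrow>
     (\<exists>\<mu>1 \<mu>2. subdist \<mu>1 \<and> subdist \<mu>2 \<and> mass \<mu>1 + mass \<mu>2 \<le> 1 \<and>
        \<mu> = (\<lambda>s. \<mu>1 s + \<mu>2 s) \<and> sat \<mu>1 \<phi> \<and> sat \<mu>2 \<psi>)"

definition prob :: "('a::countable \<Rightarrow> real) \<Rightarrow> ('a \<Rightarrow> bool) \<Rightarrow> real" where
  "prob \<mu> A = infsum \<mu> {s \<in> supp \<mu>. A s}"

end

theory Submission
  imports Defs
begin

theorem lemmaB5:
  fixes \<mu> :: "'a::countable \<Rightarrow> real" and A :: "'a \<Rightarrow> bool" and p :: real
  assumes "subdist \<mu>" and "0 \<le> p" and "p \<le> 1"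
  shows "sat \<mu> (Oplus (ProbEq A p) Top) \<longleftrightarrow> prob \<mu> A \<ge> p"
proof -
  define S where "S = {s \<in> supp \<mu>. A s}"
  have nn: "\<And>s. 0 \<le> \<mu> s" and le1: "\<And>s. \<mu> s \<le> 1" and sm: "\<mu> summable_on UNIV"
    and tot: "infsum \<mu> UNIV \<le> 1"
    using assms(1) unfolding subdist_def by auto
  have smS: "\<mu> summable_on S" using summable_on_subset_banach[OF sm] by blast
  have pq: "prob \<mu> A = infsum \<mu> S" unfolding prob_def S_def by simp
  show ?thesis
  proof
    assume "sat \<mu> (Oplus (ProbEq A p) Top)"
    then obtain \<mu>1 \<mu>2 where s1: "subdist \<mu>1" and s2: "subdist \<mu>2"
      and eq: "\<mu> = (\<lambda>s. \<mu>1 s + \<mu>2 s)" and m1: "mass \<mu>1 = p"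
      and sp: "\<forall>s\<in>supp \<mu>1. A s" by auto
    have nn1: "\<And>s. 0 \<le> \<mu>1 s" and sm1: "\<mu>1 summable_on UNIV"
      using s1 unfolding subdist_def by auto
    have nn2: "\<And>s. 0 \<le> \<mu>2 s" using s2 unfolding subdist_def by auto
    have z: "\<And>s. s \<notin> S \<Longrightarrow> \<mu>1 s = 0"
    proof -
      fix s assume "s \<notin> S"
      show "\<mu>1 s = 0"
      proof (rule ccontr)
        assume "\<mu>1 s \<noteq> 0"
        then have "\<mu>1 s > 0" using nn1[of s] by auto
        then have "s \<in> supp \<mu>1" "s \<in> supp \<mu>" using nn2[of s] eq unfolding supp_def by auto
        then show False using sp \<open>s \<notin> S\<close> unfolding S_def by auto
      qed
    qed
    have "p = infsum \<mu>1 UNIV" using m1 unfolding mass_def by simp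
    also have "\<dots> = infsum \<mu>1 S" by (rule infsum_cong_neutral) (auto simp: z)
    also have "\<dots> \<le> infsum \<mu> S"
      using summable_on_subset_banach[OF sm1] smS by (intro infsum_mono) (auto simp: eq nn2)
    finally show "prob \<mu> A \<ge> p" using pq by simp
  next
    assume ge: "prob \<mu> A \<ge> p"
    define q where "q = infsum \<mu> S"
    define c where "c = p / q"
    have q0: "q \<ge> 0" unfolding q_def by (rule infsum_nonneg) (simp add: nn)
    have pq': "p \<le> q" using ge pq q_def by simp
    have c0: "0 \<le> c" and c1: "c \<le> 1" using q0 pq' assms(2) unfolding c_def
      by (auto simp: divide_simps)
    have cq: "c * q = p" using q0 pq' assms(2) unfolding c_def by auto
    define r where "r = (\<lambda>s. if s \<in> S then \<mu> s else 0)"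
    have smr: "r summable_on UNIV"
      using smS by (subst summable_on_cong_neutral[where f=r and g=\<mu> and S=UNIV and T=S]) (auto simp: r_def)
    have ir: "infsum r UNIV = q" unfolding q_def
      by (rule infsum_cong_neutral) (auto simp: r_def)
    define \<mu>1 where "\<mu>1 = (\<lambda>s. r s * c)"
    define \<mu>2 where "\<mu>2 = (\<lambda>s. \<mu> s + \<mu>1 s * (-1))"
    have sm1: "\<mu>1 summable_on UNIV" unfolding \<mu>1_def by (rule summable_on_cmult_left[OF smr])
    have i1: "infsum \<mu>1 UNIV = p" unfolding \<mu>1_def using infsum_cmult_left[of c r UNIV] smr ir cq
      by (simp add: mult.commute)
    have sm2: "\<mu>2 summable_on UNIV" unfolding \<mu>2_def
      by (rule summable_on_add[OF sm summable_on_cmult_left[OF sm1]])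
    have i2: "infsum \<mu>2 UNIV = infsum \<mu> UNIV - p" unfolding \<mu>2_def
      using infsum_add[OF sm summable_on_cmult_left[OF sm1, of "-1"]]
        infsum_cmult_left[of "-1" \<mu>1 UNIV] sm1 i1 by simp
    have r0: "0 \<le> r s" "r s \<le> \<mu> s" for s using nn[of s] by (auto simp: r_def)
    have b1: "0 \<le> \<mu>1 s" "\<mu>1 s \<le> \<mu> s" for s
      unfolding \<mu>1_def using r0[of s] c0 c1 mult_left_le[of c "r s"] by (auto simp: mult.commute)
    have sub1: "subdist \<mu>1" unfolding subdist_def using b1 le1 sm1 i1 assms(3)
      by (meson order_trans)
    have sub2: "subdist \<mu>2" unfolding subdist_def \<mu>2_def using b1 le1 nn sm2[unfolded \<mu>2_def] i2[unfolded \<mu>2_def] tot assms(2)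
      by (smt (verit))
    have sp: "\<forall>s\<in>supp \<mu>1. A s"
      unfolding supp_def \<mu>1_def r_def S_def by auto
    show "sat \<mu> (Oplus (ProbEq A p) Top)"
    proof -
      have "mass \<mu>1 + mass \<mu>2 \<le> 1" using i1 i2 tot unfolding mass_def by simp
      moreover have "\<mu> = (\<lambda>s. \<mu>1 s + \<mu>2 s)" unfolding \<mu>2_def by auto
      moreover have "mass \<mu>1 = p" using i1 unfolding mass_def by simp
      ultimately show ?thesis using sub1 sub2 sp by auto
    qed
  qed
qed

end
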